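(* Let $(E,\mathscr{T},\le)$ be a locally compact $T_2$-preordered Tychonoff space with $G(\le)=\bigcap_{f\in\mathcal{F}}G_f$. Let $\mathcal{I}$ be the family of subsets $\mathcal{H}\subseteq\mathcal{F}$ with $G(\le)=\bigcap_{h\in\mathcal{H}}G_h$ and $i(\mathcal{H})=\mathcal{H}$, and let $\mathcal{S}=\bigcap\mathcal{I}$. If there exists a smallest Hausdorff $T_2$-preorder compactification of $E$ (one dominated by every Hausdorff $T_2$-preorder compactification of $E$), then $G(\le)=\bigcap_{h\in\mathcal{S}}G_h$, $i(\mathcal{S})=\mathcal{S}$, and the smallest compactification is equivalent to the $\mathcal{S}$-compactification.
   Context: $T_2$-preordered: the graph $G(\le)=\{(x,y):x\le y\}$ is closed in $E\times E$. $\mathcal{F}$ is the family of continuous isotone functions $f:E\to[0,1]$; $G_f=\{(x,y):f(x)\le f(y)\}$. $\mathcal{C}$ is the family of continuous functions $E\to[0,1]$ constant outside a compact set. For $\mathcal{H}\subseteq\mathcal{F}$ with $G(\le)=\bigcap_{h\in\mathcal{H}}G_h$, the $\mathcal{H}$-compactification is $c:E\to[0,1]^{\mathcal{H}\cup\mathcal{C}}$, $c(x)=(g(x))_{g\in\mathcal{H}\cup\mathcal{C}}$, with $cE$ the closure of $c(E)$, induced product topology, and preorder $x\le_c y$ iff $x_h\le y_h$ for all $h\in\mathcal{H}$; $i(\mathcal{H})$ is the set of $f\in\mathcal{F}$ such that $f\circ c^{-1}$ extends to a continuous isotone function on $(cE,\le_c)$. A Hausdorff $T_2$-preorder compactification of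 $E$ is a preorder embedding (continuous isotone injective, homeomorphism onto image, isotone inverse on image) $c:E\to cE$ with dense image into a compact Hausdorff space with a closed preorder. $c_2$ dominates $c_1$ if there is a continuous isotone $C:c_2E\to c_1E$ with $C\circ c_2=c_1$; equivalent means each dominates the other. *)

theory Defs
  imports "HOL-Analysis.Analysis"
begin

text \<open>A space E is given by a topology T on the carrier topspace T, with a relation le
  (only its restriction to topspace T matters).\<close>

definition preorder_on_space :: "'a topology \<Rightarrow> ('a \<Rightarrow> 'a \<Rightarrow> bool) \<Rightarrow> bool" where
  "preorder_on_space X le \<longleftrightarrow>
     (\<forall>x\<in>topspace X. le x x) \<and>
     (\<forall>x\<in>topspace X. \<forall>y\<in>topspace X. \<forall>z\<in>topspace X. le x y \<and> le y z \<longrightarrow> le x z)"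

definition graph_of :: "'a topology \<Rightarrow> ('a \<Rightarrow> 'a \<Rightarrow> bool) \<Rightarrow> ('a \<times> 'a) set" where
  "graph_of X le = {(x, y). x \<in> topspace X \<and> y \<in> topspace X \<and> le x y}"

definition T2_preordered :: "'a topology \<Rightarrow> ('a \<Rightarrow> 'a \<Rightarrow> bool) \<Rightarrow> bool" where
  "T2_preordered X le \<longleftrightarrow> closedin (prod_topology X X) (graph_of X le)"

definition graph_fun :: "'a topology \<Rightarrow> ('a \<Rightarrow> real) \<Rightarrow> ('a \<times> 'a) set" where
  "graph_fun X f = {(x, y). x \<in> topspace X \<and> y \<in> topspace X \<and> f x \<le> f y}"

definition isotone_on :: "'a topology \<Rightarrow> ('a \<Rightarrow> 'a \<Rightarrow> bool) \<Rightarrow> ('b \<Rightarrow> 'b \<Rightarrow> bool) \<Rightarrow> ('a \<Rightarrow> 'b) \<Rightarrow> bool" where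
  "isotone_on X le le' f \<longleftrightarrow> (\<forall>x\<in>topspace X. \<forall>y\<in>topspace X. le x y \<longrightarrow> le' (f x) (f y))"

definition Fam :: "'a topology \<Rightarrow> ('a \<Rightarrow> 'a \<Rightarrow> bool) \<Rightarrow> ('a \<Rightarrow> real) set" where
  "Fam X le = {f. f \<in> extensional (topspace X) \<and> continuous_map X (top_of_set {0..1}) f
                  \<and> isotone_on X le (\<le>) f}"

definition Cfam :: "'a topology \<Rightarrow> ('a \<Rightarrow> real) set" where
  "Cfam X = {g. g \<in> extensional (topspace X) \<and> continuous_map X (top_of_set {0..1}) g
                 \<and> (\<exists>K r. compactin X K \<and> (\<forall>x\<in>topspace X - K. g x = r))}"

definition determines :: "'a topology \<Rightarrow> ('a \<Rightarrow> 'a \<Rightarrow> bool) \<Rightarrow> ('a \<Rightarrow> real) set \<Rightarrow> bool" where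
  "determines X le H \<longleftrightarrow> graph_of X le = topspace X \<times> topspace X \<inter> (\<Inter>h\<in>H. graph_fun X h)"

text \<open>The H-compactification: c x = (g x) for g in H \<union> C, into [0,1]^(H \<union> C).\<close>
definition cube :: "'a topology \<Rightarrow> ('a \<Rightarrow> real) set \<Rightarrow> (('a \<Rightarrow> real) \<Rightarrow> real) topology" where
  "cube X H = product_topology (\<lambda>_. top_of_set {0..1}) (H \<union> Cfam X)"

definition Hmap :: "'a topology \<Rightarrow> ('a \<Rightarrow> real) set \<Rightarrow> 'a \<Rightarrow> (('a \<Rightarrow> real) \<Rightarrow> real)" where
  "Hmap X H x = restrict (\<lambda>g. g x) (H \<union> Cfam X)"

definition Htop :: "'a topology \<Rightarrow> ('a \<Rightarrow> real) set \<Rightarrow> (('a \<Rightarrow> real) \<Rightarrow> real) topology" where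
  "Htop X H = subtopology (cube X H) ((cube X H) closure_of (Hmap X H ` topspace X))"

definition Hle :: "('a \<Rightarrow> real) set \<Rightarrow> (('a \<Rightarrow> real) \<Rightarrow> real) \<Rightarrow> (('a \<Rightarrow> real) \<Rightarrow> real) \<Rightarrow> bool" where
  "Hle H p q \<longleftrightarrow> (\<forall>h\<in>H. p h \<le> q h)"

definition iH :: "'a topology \<Rightarrow> ('a \<Rightarrow> 'a \<Rightarrow> bool) \<Rightarrow> ('a \<Rightarrow> real) set \<Rightarrow> ('a \<Rightarrow> real) set" where
  "iH X le H = {f \<in> Fam X le. \<exists>F. continuous_map (Htop X H) (top_of_set {0..1}) F
                    \<and> isotone_on (Htop X H) (Hle H) (\<le>) F
                    \<and> (\<forall>x\<in>topspace X. F (Hmap X H x) = f x)}"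

definition Ifam :: "'a topology \<Rightarrow> ('a \<Rightarrow> 'a \<Rightarrow> bool) \<Rightarrow> ('a \<Rightarrow> real) set set" where
  "Ifam X le = {H. H \<subseteq> Fam X le \<and> determines X le H \<and> iH X le H = H}"

definition is_T2_compactification ::
  "'a topology \<Rightarrow> ('a \<Rightarrow> 'a \<Rightarrow> bool) \<Rightarrow> 'b topology \<Rightarrow> ('b \<Rightarrow> 'b \<Rightarrow> bool) \<Rightarrow> ('a \<Rightarrow> 'b) \<Rightarrow> bool" where
  "is_T2_compactification X le K leK c \<longleftrightarrow>
     compact_space K \<and> Hausdorff_space K \<and> preorder_on_space K leK \<and> T2_preordered K leK \<and>
     continuous_map X K c \<and> embedding_map X K c \<and>
     (\<forall>x\<in>topspace X. \<forall>y\<in>topspace X. le x y \<longleftrightarrow> leK (c x) (c y)) \<and>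
     K closure_of (c ` topspace X) = topspace K"

definition dominates ::
  "'a topology \<Rightarrow> 'b topology \<Rightarrow> ('b \<Rightarrow> 'b \<Rightarrow> bool) \<Rightarrow> ('a \<Rightarrow> 'b) \<Rightarrow>
   'c topology \<Rightarrow> ('c \<Rightarrow> 'c \<Rightarrow> bool) \<Rightarrow> ('a \<Rightarrow> 'c) \<Rightarrow> bool" where
  "dominates X K2 le2 c2 K1 le1 c1 \<longleftrightarrow>
     (\<exists>C. continuous_map K2 K1 C \<and> isotone_on K2 le2 le1 C \<and> (\<forall>x\<in>topspace X. C (c2 x) = c1 x))"

definition equivalent_compactifications ::
  "'a topology \<Rightarrow> 'b topology \<Rightarrow> ('b \<Rightarrow> 'b \<Rightarrow> bool) \<Rightarrow> ('a \<Rightarrow> 'b) \<Rightarrow>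
   'c topology \<Rightarrow> ('c \<Rightarrow> 'c \<Rightarrow> bool) \<Rightarrow> ('a \<Rightarrow> 'c) \<Rightarrow> bool" where
  "equivalent_compactifications X K2 le2 c2 K1 le1 c1 \<longleftrightarrow>
     dominates X K2 le2 c2 K1 le1 c1 \<and> dominates X K1 le1 c1 K2 le2 c2"

end

theory Submission
  imports Defs
begin

definition downset :: "'a topology \<Rightarrow> ('a \<Rightarrow> 'a \<Rightarrow> bool) \<Rightarrow> 'a set \<Rightarrow> bool" where
  "downset K le A \<longleftrightarrow> (\<forall>x\<in>topspace K. \<forall>y\<in>A. le x y \<longrightarrow> x \<in> A)"
definition upset :: "'a topology \<Rightarrow> ('a \<Rightarrow> 'a \<Rightarrow> bool) \<Rightarrow> 'a set \<Rightarrow> bool" where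
  "upset K le A \<longleftrightarrow> (\<forall>x\<in>A. \<forall>y\<in>topspace K. le x y \<longrightarrow> y \<in> A)"

lemma up_closure_closed:
  assumes "compact_space K" "Hausdorff_space K" "T2_preordered K le" "closedin K C"
  shows "closedin K {y\<in>topspace K. \<exists>x\<in>C. le x y}"
proof -
  have "closedin (prod_topology K K) (graph_of K le \<inter> (C \<times> topspace K))"
    using assms by (simp add: T2_preordered_def closedin_Int closedin_prod_Times_iff)
  then have "compactin (prod_topology K K) (graph_of K le \<inter> (C \<times> topspace K))"
    by (simp add: assms(1) closedin_compact_space compact_space_prod_topology)
  then have "compactin K (snd ` (graph_of K le \<inter> (C \<times> topspace K)))"
    using image_compactin continuous_map_snd by blast
  moreover have "snd ` (graph_of K le \<inter> (C \<times> topspace K)) = {y\<in>topspace K. \<exists>x\<in>C. le x y}"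
    using closedin_subset[OF assms(4)] by (auto simp: graph_of_def image_iff intro!: bexI[where x="(x,y)" for x y])
  ultimately show ?thesis using assms(2) compactin_imp_closedin by fastforce
qed

lemma down_closure_closed:
  assumes "compact_space K" "Hausdorff_space K" "T2_preordered K le" "closedin K C"
  shows "closedin K {y\<in>topspace K. \<exists>x\<in>C. le y x}"
proof -
  have "closedin (prod_topology K K) (graph_of K le \<inter> (topspace K \<times> C))"
    using assms by (simp add: T2_preordered_def closedin_Int closedin_prod_Times_iff)
  then have "compactin (prod_topology K K) (graph_of K le \<inter> (topspace K \<times> C))"
    by (simp add: assms(1) closedin_compact_space compact_space_prod_topology)
  then have "compactin K (fst ` (graph_of K le \<inter> (topspace K \<times> C)))"
    using image_compactin continuous_map_fst by blast
  moreover have "fst ` (graph_of K le \<inter> (topspace K \<times> C)) = {y\<in>topspace K. \<exists>x\<in>C. le y x}"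
    using closedin_subset[OF assms(4)] by (auto simp: graph_of_def image_iff intro!: bexI[where x="(x,y)" for x y])
  ultimately show ?thesis using assms(2) compactin_imp_closedin by fastforce
qed

lemma mono_normal:
  assumes "compact_space K" "Hausdorff_space K" "T2_preordered K le" "preorder_on_space K le"
    and cA: "closedin K A" and cB: "closedin K B" and dA: "downset K le A" and uB: "upset K le B" and dAB: "disjnt A B"
  obtains U V where "openin K U" "openin K V" "A \<subseteq> U" "B \<subseteq> V" "disjnt U V"
    "downset K le U" "upset K le V"
proof -
  have "normal_space K" using assms compact_Hausdorff_or_regular_imp_normal_space by blast
  then obtain U0 V0 where U0: "openin K U0" "openin K V0" "A \<subseteq> U0" "B \<subseteq> V0" "disjnt U0 V0"
    using cA cB dAB unfolding normal_space_def by meson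
  define U where "U = topspace K - {y\<in>topspace K. \<exists>x\<in>topspace K - U0. le x y}"
  define V where "V = topspace K - {y\<in>topspace K. \<exists>x\<in>topspace K - V0. le y x}"
  show thesis
  proof
    show "openin K U" unfolding U_def
      by (intro openin_diff openin_topspace up_closure_closed assms closedin_diff closedin_topspace U0)
    show "openin K V" unfolding V_def
      by (intro openin_diff openin_topspace down_closure_closed assms closedin_diff closedin_topspace U0)
    show "A \<subseteq> U" using dA U0(3) closedin_subset[OF cA]
      by (auto simp: U_def downset_def)
    show "B \<subseteq> V" using uB U0(4) closedin_subset[OF cB]
      by (auto simp: V_def upset_def)
    show "disjnt U V" unfolding disjnt_def
    proof (rule equals0I)
      fix x assume x: "x \<in> U \<inter> V"
      then have xt: "x \<in> topspace K" and lx: "le x x"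
        using assms(4) by (auto simp: U_def preorder_on_space_def)
      have "x \<in> U0" using x xt lx unfolding U_def by blast
      moreover have "x \<in> V0" using x xt lx unfolding V_def by blast
      ultimately show False using U0(5) by (auto simp: disjnt_def)
    qed
    show "downset K le U" unfolding downset_def U_def
      using assms(4) unfolding preorder_on_space_def by blast
    show "upset K le V" unfolding upset_def V_def
      using assms(4) unfolding preorder_on_space_def by blast
  qed
qed

lemma ordered_Urysohn:
  assumes cK: "compact_space K" and hK: "Hausdorff_space K" and tK: "T2_preordered K le"
    and pK: "preorder_on_space K le"
    and cA: "closedin K S" and cB: "closedin K T" and dA: "downset K le S" and uB: "upset K le T"
    and dAB: "disjnt S T"
  obtains f :: "'a \<Rightarrow> real" where "continuous_map K (top_of_set {0..1}) f"
    "\<And>x y. \<lbrakk>x \<in> topspace K; y \<in> topspace K; le x y\<rbrakk> \<Longrightarrow> f x \<le> f y"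
    "f ` S \<subseteq> {0}" "f ` T \<subseteq> {1}"
proof -
  define R where "R \<equiv> \<lambda>x y. openin K x \<and> openin K y \<and> K closure_of x \<subseteq> y \<and> downset K le x \<and> downset K le y"
  have downcompl: "downset K le (topspace K - B)" if "upset K le B" for B
    using that by (auto simp: downset_def upset_def)
  have upcompl: "upset K le (topspace K - B)" if "downset K le B" for B
    using that by (auto simp: downset_def upset_def)
  obtain U V where UV: "openin K U" "openin K V" "S \<subseteq> U" "T \<subseteq> V" "disjnt U V"
    "downset K le U" "upset K le V"
    using mono_normal[OF cK hK tK pK cA cB dA uB dAB] by metis
  have clU: "K closure_of U \<subseteq> topspace K - V"
    using UV by (intro closure_of_minimal) (auto simp: disjnt_def dest: openin_subset)
  have base: "R U (topspace K - T)"
    unfolding R_def using UV clU cB downcompl[OF uB] by auto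
  have stepR: "\<exists>z. R x z \<and> R z y" if "R x y" for x y
  proof -
    have Rxy: "openin K x" "openin K y" "K closure_of x \<subseteq> y" "downset K le x" "downset K le y"
      using that by (auto simp: R_def)
    define A' where "A' = {u\<in>topspace K. \<exists>v\<in>K closure_of x. le u v}"
    have cA': "closedin K A'" unfolding A'_def
      by (rule down_closure_closed[OF cK hK tK]) simp
    have dA': "downset K le A'" unfolding A'_def downset_def
    proof (intro ballI impI)
      fix u w assume "u \<in> topspace K" "w \<in> {u \<in> topspace K. \<exists>v\<in>K closure_of x. le u v}" "le u w"
      then obtain v where "w \<in> topspace K" "v \<in> K closure_of x" "le w v" by blast
      moreover have "v \<in> topspace K" using \<open>v \<in> K closure_of x\<close> closure_of_subset_topspace[of K x] by blast
      ultimately show "u \<in> {u \<in> topspace K. \<exists>v\<in>K closure_of x. le u v}"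
        using pK \<open>u \<in> topspace K\<close> \<open>le u w\<close> unfolding preorder_on_space_def by blast
    qed
    have A'y: "A' \<subseteq> y" using Rxy(3) Rxy(5) unfolding A'_def downset_def by blast
    have clA': "K closure_of x \<subseteq> A'"
    proof
      fix u assume u: "u \<in> K closure_of x"
      then have "u \<in> topspace K" using closure_of_subset_topspace[of K x] by blast
      then show "u \<in> A'" using u pK unfolding A'_def preorder_on_space_def by blast
    qed
    obtain U' V' where UV': "openin K U'" "openin K V'" "A' \<subseteq> U'" "topspace K - y \<subseteq> V'" "disjnt U' V'"
      "downset K le U'" "upset K le V'"
    proof (rule mono_normal[OF cK hK tK pK cA' _ dA' upcompl[OF Rxy(5)]])
      show "closedin K (topspace K - y)" using Rxy(2) by blast
      show "disjnt A' (topspace K - y)" using A'y by (auto simp: disjnt_def)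
    qed
    have "K closure_of U' \<subseteq> topspace K - V'"
      using UV' by (intro closure_of_minimal) (auto simp: disjnt_def dest: openin_subset)
    then have "K closure_of U' \<subseteq> y" using UV'(4) by blast
    then show ?thesis using Rxy UV'(1,6) clA' UV'(3) unfolding R_def
      by (intro exI[of _ U']) blast
  qed
  have transR: "R x z" if "R x y" "R y z" for x y z
    using that unfolding R_def by (meson closure_of_subset openin_subset subset_trans)
  have "\<exists>G :: real \<Rightarrow> 'a set. G 0 = U \<and> G 1 = topspace K - T \<and>
               (\<forall>x \<in> dyadics \<inter> {0..1}. \<forall>y \<in> dyadics \<inter> {0..1}. x < y \<longrightarrow> R (G x) (G y))"
    by (rule recursion_on_dyadic_fractions[OF base stepR transR])
  then obtain G :: "real \<Rightarrow> 'a set" where GG: "G 0 = U \<and> G 1 = topspace K - T \<and>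
               (\<forall>x \<in> dyadics \<inter> {0..1}. \<forall>y \<in> dyadics \<inter> {0..1}. x < y \<longrightarrow> R (G x) (G y))"
    by (rule exE)
  have G0: "G 0 = U" and G1: "G 1 = topspace K - T" using GG by simp_all
  have GR: "\<And>x y. \<lbrakk>x \<in> dyadics \<inter> {0..1}; y \<in> dyadics \<inter> {0..1}; x < y\<rbrakk> \<Longrightarrow> R (G x) (G y)"
    using GG by blast
  have G: "\<And>x y. \<lbrakk>x \<in> dyadics; y \<in> dyadics; 0 \<le> x; x < y; y \<le> 1\<rbrakk>
                      \<Longrightarrow> openin K (G x) \<and> openin K (G y) \<and> K closure_of (G x) \<subseteq> G y"
  proof -
    fix x y :: real assume xy: "x \<in> dyadics" "y \<in> dyadics" "0 \<le> x" "x < y" "y \<le> 1"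
    have "R (G x) (G y)" by (rule GR) (use xy in auto)
    then show "openin K (G x) \<and> openin K (G y) \<and> K closure_of (G x) \<subseteq> G y" by (simp add: R_def)
  qed
  have Gd: "downset K le (G r)" if "r \<in> dyadics \<inter> {0..1}" for r
  proof (cases "r = 1")
    case True then show ?thesis using G1 downcompl[OF uB] by simp
  next
    case False
    have "1 \<in> dyadics \<inter> {0..1::real}" by (force simp: dyadics_def)
    have "R (G r) (G 1)" by (rule GR) (use that False \<open>1 \<in> dyadics \<inter> {0..1::real}\<close> in auto)
    then show ?thesis by (simp add: R_def)
  qed
  define f where "f \<equiv> \<lambda>x. Inf(insert 1 {r. r \<in> dyadics \<inter> {0..1} \<and> x \<in> G r})"
  have f_ge: "f x \<ge> 0" if "x \<in> topspace K" for x
    unfolding f_def by (force intro: cInf_greatest)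
  moreover have f_le1: "f x \<le> 1" if "x \<in> topspace K" for x
  proof -
    have "bdd_below {r \<in> dyadics \<inter> {0..1}. x \<in> G r}"
      by (auto simp: bdd_below_def)
    then show ?thesis
       by (auto simp: f_def cInf_lower)
  qed
  ultimately have fim: "f \<in> topspace K \<rightarrow> {0..1}"
    by (auto simp: f_def)
  have 0: "0 \<in> dyadics \<inter> {0..1::real}" and 1: "1 \<in> dyadics \<inter> {0..1::real}"
    by (force simp: dyadics_def)+
  then have opeG: "openin K (G r)" if "r \<in> dyadics \<inter> {0..1}" for r
    using G G0 \<open>openin K U\<close> less_eq_real_def that by auto
  have "x \<in> G 0" if "x \<in> S" for x
    using G0 \<open>S \<subseteq> U\<close> that by blast
  with 0 have fimS: "f ` S \<subseteq> {0}"
    unfolding f_def by (force intro!: cInf_eq_minimum)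
  have False if "r \<in> dyadics" "0 \<le> r" "r < 1" "x \<in> G r" "x \<in> T" for r x
    using G [of r 1] 1
    by (smt (verit, best) DiffD2 G1 Int_iff closure_of_subset inf.orderE openin_subset that)
  then have "r\<ge>1" if "r \<in> dyadics" "0 \<le> r" "r \<le> 1" "x \<in> G r" "x \<in> T" for r x
    using linorder_not_le that by blast
  then have fimT: "f ` T \<subseteq> {1}"
    unfolding f_def by (force intro!: cInf_eq_minimum)
  have fle1: "f z \<le> 1" for z
    by (force simp: f_def intro: cInf_lower)
  have fle: "f z \<le> x" if "x \<in> dyadics \<inter> {0..1}" "z \<in> G x" for z x
    using that by (force simp: f_def intro: cInf_lower)
  have *: "b \<le> f z" if "b \<le> 1" "\<And>x. \<lbrakk>x \<in> dyadics \<inter> {0..1}; z \<in> G x\<rbrakk> \<Longrightarrow> b \<le> x" for z b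
    using that by (force simp: f_def intro: cInf_greatest)
  have **: "r \<le> f x" if r: "r \<in> dyadics \<inter> {0..1}" "x \<notin> G r" for r x
  proof (rule *)
    show "r \<le> s" if "s \<in> dyadics \<inter> {0..1}" and "x \<in> G s" for s :: real
      using that r G [of s r] by (force simp: dest: closure_of_subset openin_subset)
  qed (use that in force)

  have "\<exists>U. openin K U \<and> x \<in> U \<and> (\<forall>y \<in> U. \<bar>f y - f x\<bar> < \<epsilon>)"
    if "x \<in> topspace K" and "0 < \<epsilon>" for x \<epsilon>
  proof -
    have A: "\<exists>r. r \<in> dyadics \<inter> {0..1} \<and> r < y \<and> \<bar>r - y\<bar> < d" if "0 < y" "y \<le> 1" "0 < d" for y d::real
    proof -
      obtain n q r 
        where "of_nat q / 2^n < y" "y < of_nat r / 2^n" "\<bar>q / 2^n - r / 2^n \<bar> < d"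
        by (smt (verit, del_insts) padic_rational_approximation_straddle_pos  \<open>0 < d\<close> \<open>0 < y\<close>) 
      then show ?thesis
        unfolding dyadics_def
        using divide_eq_0_iff that(2) by fastforce
    qed
    have B: "\<exists>r. r \<in> dyadics \<inter> {0..1} \<and> y < r \<and> \<bar>r - y\<bar> < d" if "0 \<le> y" "y < 1" "0 < d" for y d::real
    proof -
      obtain n q r 
        where "of_nat q / 2^n \<le> y" "y < of_nat r / 2^n" "\<bar>q / 2^n - r / 2^n \<bar> < d"
        using padic_rational_approximation_straddle_pos_le
        by (smt (verit, del_insts) \<open>0 < d\<close> \<open>0 \<le> y\<close>) 
      then show ?thesis
        apply (clarsimp simp: dyadics_def)
        using divide_eq_0_iff \<open>y < 1\<close>
        by (smt (verit) divide_nonneg_nonneg divide_self of_nat_0_le_iff of_nat_1 power_0 zero_le_power) 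
    qed
    show ?thesis
    proof (cases "f x = 0")
      case True
      with B[of 0] obtain r where r: "r \<in> dyadics \<inter> {0..1}" "0 < r" "\<bar>r\<bar> < \<epsilon>/2"
        by (smt (verit) \<open>0 < \<epsilon>\<close> half_gt_zero)
      show ?thesis
      proof (intro exI conjI)
        show "openin K (G r)"
          using opeG r(1) by blast
        show "x \<in> G r"
          using True ** r by force
        show "\<forall>y \<in> G r. \<bar>f y - f x\<bar> < \<epsilon>"
          using f_ge \<open>openin K (G r)\<close> fle openin_subset r by (fastforce simp: True)
      qed
    next
      case False
      show ?thesis 
      proof (cases "f x = 1")
        case True
        with A[of 1] obtain r where r: "r \<in> dyadics \<inter> {0..1}" "r < 1" "\<bar>r-1\<bar> < \<epsilon>/2"
          by (smt (verit) \<open>0 < \<epsilon>\<close> half_gt_zero)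
        define G' where "G' \<equiv> topspace K - K closure_of G r"
        show ?thesis
        proof (intro exI conjI)
          show "openin K G'"
            unfolding G'_def by fastforce
          obtain r' where "r' \<in> dyadics \<and> 0 \<le> r' \<and> r' \<le> 1 \<and> r < r' \<and> \<bar>r' - r\<bar> < 1 - r"
            using B r by force 
          moreover
          have "1 - r \<in> dyadics" "0 \<le> r"
            using 1 r dyadics_diff by force+
          ultimately have "x \<notin> K closure_of G r"
            using G True r fle by force
          then show "x \<in> G'"
            by (simp add: G'_def that)
          show "\<forall>y \<in> G'. \<bar>f y - f x\<bar> < \<epsilon>"
            using ** f_le1 in_closure_of r by (fastforce simp: True G'_def)
        qed
      next
        case False
        have "0 < f x" "f x < 1"
          using fle1 f_ge that(1) \<open>f x \<noteq> 0\<close> \<open>f x \<noteq> 1\<close> by (metis order_le_less) +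
        obtain r where r: "r \<in> dyadics \<inter> {0..1}" "r < f x" "\<bar>r - f x\<bar> < \<epsilon> / 2"
          using A \<open>0 < \<epsilon>\<close> \<open>0 < f x\<close> \<open>f x < 1\<close> by (smt (verit, best) half_gt_zero)
        obtain r' where r': "r' \<in> dyadics \<inter> {0..1}" "f x < r'" "\<bar>r' - f x\<bar> < \<epsilon> / 2"
          using B \<open>0 < \<epsilon>\<close> \<open>0 < f x\<close> \<open>f x < 1\<close> by (smt (verit, best) half_gt_zero)
        have "r < 1"
          using \<open>f x < 1\<close> r(2) by force
        show ?thesis
        proof (intro conjI exI)
          show "openin K (G r' - K closure_of G r)"
            using closedin_closure_of opeG r' by blast
          have "x \<in> K closure_of G r \<Longrightarrow> False"
            using B [of r "f x - r"] r \<open>r < 1\<close> G [of r] fle by force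
          then show "x \<in> G r' - K closure_of G r"
            using ** r' by fastforce
          show "\<forall>y\<in>G r' - K closure_of G r. \<bar>f y - f x\<bar> < \<epsilon>"
            using r r' ** G closure_of_subset field_sum_of_halves fle openin_subset subset_eq
            by (smt (verit) DiffE opeG)
        qed
      qed
    qed
  qed
  then have contf: "continuous_map K (top_of_set {0..1}) f"
    by (auto simp: Met_TC.continuous_map_to_metric dist_real_def continuous_map_in_subtopology fim abs_minus_commute simp flip: mtopology_is_euclidean)

  have fmono: "f x \<le> f y" if "x \<in> topspace K" "y \<in> topspace K" "le x y" for x y
    unfolding f_def
  proof (rule cInf_superset_mono)
    show "insert 1 {r. r \<in> dyadics \<inter> {0..1} \<and> y \<in> G r} \<subseteq> insert 1 {r. r \<in> dyadics \<inter> {0..1} \<and> x \<in> G r}"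
      using Gd that unfolding downset_def by blast
  qed (auto simp: bdd_below_def intro!: exI[of _ 0])
  show thesis
  proof (rule that)
    show "continuous_map K (top_of_set {0..1}) f" by (rule contf)
    show "f ` S \<subseteq> {0}" by (rule fimS)
    show "f ` T \<subseteq> {1}" by (rule fimT)
  qed (rule fmono)
qed


lemma Nachbin_separation:
  assumes cK: "compact_space K" and hK: "Hausdorff_space K" and tK: "T2_preordered K le"
    and pK: "preorder_on_space K le"
    and p: "p \<in> topspace K" and q: "q \<in> topspace K" and npq: "\<not> le p q"
  obtains F :: "'a \<Rightarrow> real" where "continuous_map K (top_of_set {0..1}) F"
    "\<And>x y. \<lbrakk>x \<in> topspace K; y \<in> topspace K; le x y\<rbrakk> \<Longrightarrow> F x \<le> F y"
    "F q = 0" "F p = 1"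
proof -
  define S where "S = {y\<in>topspace K. \<exists>x\<in>{q}. le y x}"
  define T where "T = {y\<in>topspace K. \<exists>x\<in>{p}. le x y}"
  have cS: "closedin K S" unfolding S_def
    by (rule down_closure_closed[OF cK hK tK]) (simp add: closedin_Hausdorff_singleton hK q)
  have cT: "closedin K T" unfolding T_def
    by (rule up_closure_closed[OF cK hK tK]) (simp add: closedin_Hausdorff_singleton hK p)
  have dS: "downset K le S" using pK q unfolding S_def downset_def preorder_on_space_def by blast
  have uT: "upset K le T" using pK p unfolding T_def upset_def preorder_on_space_def by blast
  have dST: "disjnt S T" using pK p q npq unfolding S_def T_def disjnt_def preorder_on_space_def by blast
  have qS: "q \<in> S" and pT: "p \<in> T" using pK p q unfolding S_def T_def preorder_on_space_def by auto
  obtain f :: "'a \<Rightarrow> real" where f: "continuous_map K (top_of_set {0..1}) f"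
    "\<And>x y. \<lbrakk>x \<in> topspace K; y \<in> topspace K; le x y\<rbrakk> \<Longrightarrow> f x \<le> f y"
    "f ` S \<subseteq> {0}" "f ` T \<subseteq> {1}"
    using ordered_Urysohn[OF cK hK tK pK cS cT dS uT dST] by metis
  show thesis
  proof (rule that)
    show "continuous_map K (top_of_set {0..1}) f" by (rule f(1))
    show "f q = 0" using f(3) qS by blast
    show "f p = 1" using f(4) pT by blast
  qed (rule f(2))
qed

lemma Cfam_sep:
  assumes LC: "locally_compact_space T" and HT: "Hausdorff_space T"
    and U: "openin T U" and x: "x \<in> U"
  obtains g where "g \<in> Cfam T" "g x = 0" "\<And>y. y \<in> topspace T - U \<Longrightarrow> g y = 1"
proof -
  have "neighbourhood_base_of (\<lambda>U. openin T U \<and> compactin T (T closure_of U)) T"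
    using LC HT locally_compact_space_neighbourhood_base_open_closure_of by blast
  then obtain U' V where UV: "openin T U'" "openin T V" "compactin T (T closure_of V)"
      "x \<in> U'" "U' \<subseteq> V" "V \<subseteq> U"
    using U x unfolding neighbourhood_base_of by metis
  define A where "A = Alexandroff_compactification T"
  have nA: "normal_space A" unfolding A_def
    by (intro compact_Hausdorff_or_regular_imp_normal_space)
      (auto simp: Hausdorff_space_Alexandroff_compactification LC HT)
  have hA: "Hausdorff_space A" unfolding A_def
    by (auto simp: Hausdorff_space_Alexandroff_compactification LC HT)
  have xt: "x \<in> topspace T" using U x openin_subset by blast
  have c1: "closedin A {Some x}"
    using hA xt by (intro closedin_Hausdorff_singleton) (auto simp: A_def)
  have c2: "closedin A (topspace A - Some ` V)"
    using UV(2) by (intro closedin_diff closedin_topspace) (simp add: A_def)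
  have d: "disjnt {Some x} (topspace A - Some ` V)" using UV by (auto simp: disjnt_def)
  obtain \<phi> :: "'a option \<Rightarrow> real" where \<phi>: "continuous_map A (top_of_set {0..1}) \<phi>"
      "\<phi> ` {Some x} \<subseteq> {0}" "\<phi> ` (topspace A - Some ` V) \<subseteq> {1}"
    using Urysohn_lemma[OF nA c1 c2 d, of 0 1] by auto
  define g where "g = restrict (\<phi> \<circ> Some) (topspace T)"
  show thesis
  proof (rule that)
    have "continuous_map T (top_of_set {0..1}) (\<phi> \<circ> Some)"
      using \<phi>(1) continuous_map_Some unfolding A_def by (rule continuous_map_compose[rotated])
    then have cg: "continuous_map T (top_of_set {0..1}) g"
      by (rule continuous_map_eq) (simp add: g_def)
    have "\<forall>y\<in>topspace T - T closure_of V. g y = 1"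
    proof
      fix y assume y: "y \<in> topspace T - T closure_of V"
      then have "y \<notin> V" using closure_of_subset[of V T] UV(2) openin_subset by blast
      then have "Some y \<in> topspace A - Some ` V" using y by (auto simp: A_def)
      then show "g y = 1" using \<phi>(3) y by (auto simp: g_def)
    qed
    then show "g \<in> Cfam T" unfolding Cfam_def using cg UV(3)
      by (auto simp: g_def)
    show "g x = 0" using \<phi>(2) xt by (simp add: g_def)
    fix y assume y: "y \<in> topspace T - U"
    then have "Some y \<in> topspace A - Some ` V" using UV(6) by (auto simp: A_def)
    then show "g y = 1" using \<phi>(3) y by (auto simp: g_def)
  qed
qed


lemma range01: "continuous_map X (top_of_set {0..1}) f \<Longrightarrow> x \<in> topspace X \<Longrightarrow> f x \<in> {0..(1::real)}"
  using continuous_map_image_subset_topspace by fastforce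

lemma Fam_range: "f \<in> Fam X le \<Longrightarrow> x \<in> topspace X \<Longrightarrow> f x \<in> {0..1}"
  by (auto simp: Fam_def dest: range01)

lemma Cfam_range: "f \<in> Cfam X \<Longrightarrow> x \<in> topspace X \<Longrightarrow> f x \<in> {0..1}"
  by (auto simp: Cfam_def dest: range01)

lemma topspace_cube: "topspace (cube X H) = (\<Pi>\<^sub>E g\<in>H \<union> Cfam X. {0..1})"
  by (simp add: cube_def)

lemma Hmap_in_cube:
  assumes "H \<subseteq> Fam X le" "x \<in> topspace X"
  shows "Hmap X H x \<in> topspace (cube X H)"
  unfolding topspace_cube Hmap_def restrict_PiE_iff
proof
  fix g assume "g \<in> H \<union> Cfam X"
  then show "g x \<in> {0..1}"
  proof
    assume "g \<in> H" then have "g \<in> Fam X le" using assms(1) by blast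
    then show ?thesis using assms(2) by (rule Fam_range)
  next
    assume "g \<in> Cfam X" then show ?thesis using assms(2) by (rule Cfam_range)
  qed
qed

lemma Hmap_apply: "g \<in> H \<union> Cfam X \<Longrightarrow> Hmap X H x g = g x"
  by (simp add: Hmap_def)

lemma Hmap_cont_cube:
  assumes "H \<subseteq> Fam X le"
  shows "continuous_map X (cube X H) (Hmap X H)"
  unfolding cube_def continuous_map_componentwise
proof
  show "Hmap X H ` topspace X \<subseteq> extensional (H \<union> Cfam X)" by (auto simp: Hmap_def)
  show "\<forall>k\<in>H \<union> Cfam X. continuous_map X (top_of_set {0..1}) (\<lambda>x. Hmap X H x k)"
  proof
    fix k assume k: "k \<in> H \<union> Cfam X"
    then have "continuous_map X (top_of_set {0..1}) k"
      using assms unfolding Fam_def Cfam_def by blast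
    then show "continuous_map X (top_of_set {0..1}) (\<lambda>x. Hmap X H x k)"
      by (rule continuous_map_eq) (simp add: Hmap_apply[OF k])
  qed
qed

lemma topspace_Htop: "topspace (Htop X H) = cube X H closure_of (Hmap X H ` topspace X)"
  by (simp add: Htop_def closure_of_subset_topspace inf.absorb2)

lemma Hmap_cont:
  assumes "H \<subseteq> Fam X le"
  shows "continuous_map X (Htop X H) (Hmap X H)"
  unfolding Htop_def continuous_map_in_subtopology
proof
  show "continuous_map X (cube X H) (Hmap X H)" using Hmap_cont_cube[OF assms] .
  have "Hmap X H ` topspace X \<subseteq> topspace (cube X H)" using Hmap_in_cube[OF assms] by blast
  then show "Hmap X H \<in> topspace X \<rightarrow> cube X H closure_of Hmap X H ` topspace X"
    using closure_of_subset by fastforce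
qed

lemma proj_cont01:
  assumes "h \<in> H \<union> Cfam X"
  shows "continuous_map (Htop X H) (top_of_set {0..1}) (\<lambda>p. p h)"
  unfolding Htop_def cube_def
  by (rule continuous_map_from_subtopology, rule continuous_map_product_projection[OF assms])

lemma proj_cont:
  assumes "h \<in> H \<union> Cfam X"
  shows "continuous_map (Htop X H) euclideanreal (\<lambda>p. p h)"
  using proj_cont01[OF assms] by (simp add: continuous_map_in_subtopology)

lemma compact_Htop: "compact_space (Htop X H)"
proof -
  have "compact_space (cube X H)"
    unfolding cube_def compact_space_product_topology
    by (simp add: compact_space_subtopology)
  then show ?thesis unfolding Htop_def
    by (intro compact_space_subtopology closedin_compact_space) auto
qed

lemma Hausdorff_Htop: "Hausdorff_space (Htop X H)"
  unfolding Htop_def cube_def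
  by (intro Hausdorff_space_subtopology) (simp add: Hausdorff_space_product_topology Hausdorff_space_subtopology)

lemma T2_Htop: "T2_preordered (Htop X H) (Hle H)"
proof -
  let ?P = "prod_topology (Htop X H) (Htop X H)"
  have eq: "graph_of (Htop X H) (Hle H) = {z\<in>topspace ?P. \<forall>h\<in>H. fst z h - snd z h \<in> {..0}}"
    by (auto simp: graph_of_def Hle_def)
  have cl: "closedin ?P {z\<in>topspace ?P. fst z h - snd z h \<in> {..0}}" if "h \<in> H" for h
  proof (rule closedin_continuous_map_preimage)
    have "continuous_map ?P euclideanreal (\<lambda>z. fst z h)"
      using continuous_map_compose[OF continuous_map_fst proj_cont[of h H X]] that by (simp add: o_def)
    moreover have "continuous_map ?P euclideanreal (\<lambda>z. snd z h)"
      using continuous_map_compose[OF continuous_map_snd proj_cont[of h H X]] that by (simp add: o_def)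
    ultimately show "continuous_map ?P euclideanreal (\<lambda>z. fst z h - snd z h)"
      by (intro continuous_map_diff)
  qed (simp add: closed_atMost)
  show ?thesis
  proof (cases "H = {}")
    case True then show ?thesis using eq by (simp add: T2_preordered_def flip: topspace_prod_topology)
  next
    case False
    have "{z\<in>topspace ?P. \<forall>h\<in>H. fst z h - snd z h \<in> {..0}} = (\<Inter>h\<in>H. {z\<in>topspace ?P. fst z h - snd z h \<in> {..0}})"
      using False by auto
    moreover have "closedin ?P (\<Inter>h\<in>H. {z\<in>topspace ?P. fst z h - snd z h \<in> {..0}})"
      using False cl by (intro closedin_Inter) auto
    ultimately show ?thesis using eq by (simp add: T2_preordered_def)
  qed
qed

lemma preorder_Htop: "preorder_on_space (Htop X H) (Hle H)"
  unfolding preorder_on_space_def Hle_def by (meson order_refl order_trans)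

lemma dense_Htop: "Htop X H closure_of (Hmap X H ` topspace X) = topspace (Htop X H)"
proof -
  let ?C = "cube X H closure_of (Hmap X H ` topspace X)"
  let ?S = "Hmap X H ` topspace X"
  have "topspace (cube X H) \<inter> ?S \<subseteq> ?C" by (rule closure_of_subset_Int)
  then have "topspace (cube X H) \<inter> ?S \<subseteq> ?C \<inter> ?S" by blast
  then have "cube X H closure_of (topspace (cube X H) \<inter> ?S) \<subseteq> cube X H closure_of (?C \<inter> ?S)"
    by (rule closure_of_mono)
  moreover have "?C = cube X H closure_of (topspace (cube X H) \<inter> ?S)" by (rule closure_of_restrict)
  ultimately have 1: "?C \<subseteq> cube X H closure_of (?C \<inter> ?S)" by simp
  have 2: "cube X H closure_of (?C \<inter> ?S) \<subseteq> ?C"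
    by (rule closure_of_mono) (rule Int_lower2)
  have "Htop X H closure_of ?S = ?C \<inter> cube X H closure_of (?C \<inter> ?S)"
    unfolding Htop_def by (rule closure_of_subtopology)
  also have "\<dots> = ?C" using 1 2 by (intro equalityI Int_greatest order_refl Int_lower1)
  also have "\<dots> = topspace (Htop X H)" by (rule topspace_Htop[symmetric])
  finally show ?thesis .
qed


lemma Hle_iff:
  assumes "determines X le H" "x \<in> topspace X" "y \<in> topspace X"
  shows "le x y \<longleftrightarrow> Hle H (Hmap X H x) (Hmap X H y)"
proof -
  have "le x y \<longleftrightarrow> (x,y) \<in> graph_of X le" using assms by (simp add: graph_of_def)
  also have "\<dots> \<longleftrightarrow> (x,y) \<in> topspace X \<times> topspace X \<inter> (\<Inter>h\<in>H. graph_fun X h)"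
    using assms(1) by (simp add: determines_def)
  also have "\<dots> \<longleftrightarrow> (\<forall>h\<in>H. h x \<le> h y)"
    using assms(2,3) by (simp add: graph_fun_def)
  also have "\<dots> \<longleftrightarrow> Hle H (Hmap X H x) (Hmap X H y)"
    by (simp add: Hle_def Hmap_def)
  finally show ?thesis .
qed

lemma proj_cube_cont:
  assumes "h \<in> H \<union> Cfam X"
  shows "continuous_map (cube X H) euclideanreal (\<lambda>p. p h)"
proof -
  have "continuous_map (cube X H) (top_of_set {0..1}) (\<lambda>p. p h)"
    unfolding cube_def by (rule continuous_map_product_projection[OF assms])
  then show ?thesis by (simp add: continuous_map_in_subtopology)
qed

lemma Hmap_embedding:
  assumes LC: "locally_compact_space X" and HT: "Hausdorff_space X" and H: "H \<subseteq> Fam X le"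
  shows "embedding_map X (Htop X H) (Hmap X H)"
proof -
  let ?f = "Hmap X H" and ?E = "topspace X"
  let ?Y = "subtopology (cube X H) (?f ` ?E)"
  have inj: "inj_on ?f ?E"
  proof
    fix x y assume x: "x \<in> ?E" and y: "y \<in> ?E" and fxy: "?f x = ?f y"
    show "x = y"
    proof (rule ccontr)
      assume "x \<noteq> y"
      have "openin X (?E - {y})" using HT y by (intro openin_diff openin_topspace closedin_Hausdorff_singleton)
      moreover have "x \<in> ?E - {y}" using x \<open>x \<noteq> y\<close> by blast
      ultimately obtain g where g: "g \<in> Cfam X" "g x = 0" "\<And>z. z \<in> ?E - (?E - {y}) \<Longrightarrow> g z = 1"
        using Cfam_sep[OF LC HT] by metis
      have gy: "g y = 1" using g(3) y by blast
      have "?f x g = g x" "?f y g = g y" using g(1) by (simp_all add: Hmap_apply)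
      then show False using fxy g(2) gy by simp
    qed
  qed
  have cont: "continuous_map X ?Y ?f"
    using Hmap_cont_cube[OF H] by (simp add: continuous_map_in_subtopology)
  have opn: "open_map X ?Y ?f"
    unfolding open_map_def
  proof (intro allI impI)
    fix U assume U: "openin X U"
    show "openin ?Y (?f ` U)"
      unfolding openin_subopen[of ?Y "?f ` U"]
    proof
      fix p assume "p \<in> ?f ` U"
      then obtain x where x: "x \<in> U" "p = ?f x" by blast
      have xE: "x \<in> ?E" using U x openin_subset by blast
      obtain g where g: "g \<in> Cfam X" "g x = 0" "\<And>z. z \<in> ?E - U \<Longrightarrow> g z = 1"
        using Cfam_sep[OF LC HT U x(1)] by metis
      define W0 where "W0 = {q \<in> topspace (cube X H). q g \<in> {..<1}}"
      have "openin (cube X H) W0" unfolding W0_def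
        by (rule openin_continuous_map_preimage[OF proj_cube_cont]) (use g in auto)
      then have oW: "openin ?Y (W0 \<inter> ?f ` ?E)" by (auto simp: openin_subtopology)
      have pW: "p \<in> W0 \<inter> ?f ` ?E"
        using x xE g Hmap_in_cube[OF H xE] by (simp add: W0_def Hmap_apply)
      have "W0 \<inter> ?f ` ?E \<subseteq> ?f ` U"
      proof
        fix q assume "q \<in> W0 \<inter> ?f ` ?E"
        then obtain y where y: "y \<in> ?E" "q = ?f y" "q g < 1" by (auto simp: W0_def)
        then have "g y < 1" using g(1) by (simp add: Hmap_apply)
        then have "y \<in> U" using g(3) y(1) by force
        then show "q \<in> ?f ` U" using y(2) by blast
      qed
      then show "\<exists>T. openin ?Y T \<and> p \<in> T \<and> T \<subseteq> ?f ` U" using oW pW by blast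
    qed
  qed
  have "embedding_map X ?Y ?f" by (rule injective_open_imp_embedding_map[OF cont opn inj])
  then have "embedding_map X (cube X H) ?f" by (simp add: embedding_map_in_subtopology)
  moreover have "?f ` ?E \<subseteq> topspace (Htop X H)"
    using Hmap_cont[OF H] continuous_map_image_subset_topspace by blast
  ultimately show ?thesis
    unfolding Htop_def embedding_map_in_subtopology
    by (simp add: Htop_def)
qed

lemma Htop_compactification:
  assumes LC: "locally_compact_space X" and HT: "Hausdorff_space X"
    and H: "H \<subseteq> Fam X le" and D: "determines X le H"
  shows "is_T2_compactification X le (Htop X H) (Hle H) (Hmap X H)"
  unfolding is_T2_compactification_def
  using compact_Htop Hausdorff_Htop preorder_Htop T2_Htop Hmap_cont[OF H]
    Hmap_embedding[OF LC HT H] Hle_iff[OF D] dense_Htop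
  by blast

lemma Cfam_extend:
  assumes LC: "locally_compact_space X"
    and cpt: "is_T2_compactification X le K leK c" and g: "g \<in> Cfam X"
  obtains G where "continuous_map K (top_of_set {0..1}) G" "\<And>x. x \<in> topspace X \<Longrightarrow> G (c x) = g x"
proof -
  let ?E = "topspace X"
  have cK: "compact_space K" and hK: "Hausdorff_space K" and cc: "continuous_map X K c"
    and emb: "embedding_map X K c" and dense: "K closure_of (c ` ?E) = topspace K"
    using cpt by (auto simp: is_T2_compactification_def)
  obtain Kc r where Kc: "compactin X Kc" "\<And>x. x \<in> ?E - Kc \<Longrightarrow> g x = r"
    and gc: "continuous_map X (top_of_set {0..1}) g"
    using g unfolding Cfam_def by blast
  define r0 where "r0 = (if ?E - Kc \<noteq> {} then r else 0)"
  have r0: "\<And>x. x \<in> ?E - Kc \<Longrightarrow> g x = r0" using Kc(2) by (auto simp: r0_def)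
  have r01: "r0 \<in> {0..1}"
  proof (cases "?E - Kc = {}")
    case True then show ?thesis by (simp add: r0_def)
  next
    case False
    then obtain x where "x \<in> ?E - Kc" by blast
    then show ?thesis using r0[of x] range01[OF gc, of x] by simp
  qed
  have sub: "c ` ?E \<subseteq> topspace K" using cc continuous_map_image_subset_topspace by blast
  have hm: "homeomorphic_map X (subtopology K (c ` ?E)) c" using emb by (simp add: embedding_map_def)
  then obtain c' where c': "homeomorphic_maps X (subtopology K (c ` ?E)) c c'"
    using homeomorphic_map_maps by blast
  have c'c: "continuous_map (subtopology K (c ` ?E)) X c'" and c'inv: "\<And>x. x \<in> ?E \<Longrightarrow> c' (c x) = x"
    using c' by (auto simp: homeomorphic_maps_def)
  have "locally_compact_space (subtopology K (c ` ?E))"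
    using LC embedding_map_imp_homeomorphic_space[OF emb] homeomorphic_locally_compact_space by blast
  then have openE: "openin K (c ` ?E)"
    by (rule dense_locally_compact_openin_Hausdorff_space[OF hK sub dense])
  have "compactin K (c ` Kc)" using Kc(1) cc image_compactin by blast
  then have closedKc: "closedin K (c ` Kc)" using hK compactin_imp_closedin by blast
  define G where "G = (\<lambda>p. if p \<in> c ` ?E then g (c' p) else r0)"
  show thesis
  proof (rule that)
    show "continuous_map K (top_of_set {0..1}) G"
    proof (rule pasting_lemma[where I="{True, False}" and T="\<lambda>b. if b then c ` ?E else topspace K - c ` Kc"
          and f="\<lambda>b. if b then g \<circ> c' else (\<lambda>_. r0)"])
      fix i :: bool assume "i \<in> {True, False}"
      show "openin K (if i then c ` ?E else topspace K - c ` Kc)"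
        using openE closedKc by auto
      show "continuous_map (subtopology K (if i then c ` ?E else topspace K - c ` Kc)) (top_of_set {0..1})
              (if i then g \<circ> c' else (\<lambda>_. r0))"
      proof (cases i)
        case True
        then show ?thesis using continuous_map_compose[OF c'c gc] by simp
      next
        case False
        then show ?thesis using r01 by simp
      qed
    next
      fix i j :: bool and p
      assume "i \<in> {True, False}" "j \<in> {True, False}"
        and p: "p \<in> topspace K \<inter> (if i then c ` ?E else topspace K - c ` Kc) \<inter> (if j then c ` ?E else topspace K - c ` Kc)"
      show "(if i then g \<circ> c' else (\<lambda>_. r0)) p = (if j then g \<circ> c' else (\<lambda>_. r0)) p"
      proof (cases "i = j")
        case True then show ?thesis by simp
      next
        case False
        then have "p \<in> c ` ?E" "p \<notin> c ` Kc" using p by (cases i; auto)+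
        then obtain x where x: "x \<in> ?E" "p = c x" "x \<notin> Kc" by blast
        then have "g (c' p) = r0" using r0 c'inv by simp
        then show ?thesis using False by (cases i; cases j; simp)
      qed
    next
      fix p assume p: "p \<in> topspace K"
      show "\<exists>j. j \<in> {True, False} \<and> p \<in> (if j then c ` ?E else topspace K - c ` Kc) \<and>
                G p = (if j then g \<circ> c' else (\<lambda>_. r0)) p"
      proof (cases "p \<in> c ` ?E")
        case True then show ?thesis by (intro exI[of _ True]) (simp add: G_def)
      next
        case False
        then have "p \<notin> c ` Kc" using compactin_subset_topspace[OF Kc(1)] by blast
        then show ?thesis using False p by (intro exI[of _ False]) (simp add: G_def)
      qed
    qed
    fix x assume "x \<in> ?E"
    then show "G (c x) = g x" by (simp add: G_def c'inv)
  qed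
qed

definition extset :: "'a topology \<Rightarrow> ('a \<Rightarrow> 'a \<Rightarrow> bool) \<Rightarrow> 'b topology \<Rightarrow> ('b \<Rightarrow> 'b \<Rightarrow> bool) \<Rightarrow> ('a \<Rightarrow> 'b) \<Rightarrow> ('a \<Rightarrow> real) set" where
  "extset X le K leK c = {f \<in> Fam X le. \<exists>F. continuous_map K (top_of_set {0..1}) F
                    \<and> isotone_on K leK (\<le>) F \<and> (\<forall>x\<in>topspace X. F (c x) = f x)}"

lemma iH_extset: "iH X le H = extset X le (Htop X H) (Hle H) (Hmap X H)"
  by (simp add: iH_def extset_def)

lemma dom_ext:
  assumes "dominates X K2 le2 c2 K1 le1 c1"
  shows "extset X le K1 le1 c1 \<subseteq> extset X le K2 le2 c2"
proof
  fix f assume "f \<in> extset X le K1 le1 c1"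
  then obtain F where f: "f \<in> Fam X le" and F: "continuous_map K1 (top_of_set {0..1}) F"
    "isotone_on K1 le1 (\<le>) F" "\<forall>x\<in>topspace X. F (c1 x) = f x"
    unfolding extset_def by blast
  obtain C where C: "continuous_map K2 K1 C" "isotone_on K2 le2 le1 C" "\<forall>x\<in>topspace X. C (c2 x) = c1 x"
    using assms unfolding dominates_def by blast
  have "continuous_map K2 (top_of_set {0..1}) (F \<circ> C)"
    using C(1) F(1) by (rule continuous_map_compose)
  moreover have "isotone_on K2 le2 (\<le>) (F \<circ> C)"
    unfolding isotone_on_def
  proof (intro ballI impI)
    fix x y assume xy: "x \<in> topspace K2" "y \<in> topspace K2" "le2 x y"
    then have "C x \<in> topspace K1" "C y \<in> topspace K1" "le1 (C x) (C y)"
      using C(1,2) continuous_map_image_subset_topspace unfolding isotone_on_def by blast+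
    then show "(F \<circ> C) x \<le> (F \<circ> C) y" using F(2) unfolding isotone_on_def by simp
  qed
  moreover have "\<forall>x\<in>topspace X. (F \<circ> C) (c2 x) = f x" using C(3) F(3) by simp
  ultimately show "f \<in> extset X le K2 le2 c2" unfolding extset_def using f by blast
qed

lemma Phi_dominates:
  assumes LC: "locally_compact_space X"
    and cpt: "is_T2_compactification X le K leK c"
    and H: "H \<subseteq> extset X le K leK c"
  shows "dominates X K leK c (Htop X H) (Hle H) (Hmap X H)"
proof -
  let ?E = "topspace X" and ?I = "H \<union> Cfam X"
  have ex: "\<exists>F. continuous_map K (top_of_set {0..1}) F \<and> (g \<in> H \<longrightarrow> isotone_on K leK (\<le>) F)
               \<and> (\<forall>x\<in>?E. F (c x) = g x)" if "g \<in> ?I" for g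
  proof (cases "g \<in> H")
    case True
    then show ?thesis using H unfolding extset_def by blast
  next
    case False
    then have "g \<in> Cfam X" using that by blast
    then obtain G where "continuous_map K (top_of_set {0..1}) G" "\<And>x. x \<in> ?E \<Longrightarrow> G (c x) = g x"
      using Cfam_extend[OF LC cpt] by metis
    then show ?thesis using False by blast
  qed
  define ext where "ext = (\<lambda>g. SOME F. continuous_map K (top_of_set {0..1}) F \<and> (g \<in> H \<longrightarrow> isotone_on K leK (\<le>) F)
               \<and> (\<forall>x\<in>?E. F (c x) = g x))"
  have ext: "continuous_map K (top_of_set {0..1}) (ext g) \<and> (g \<in> H \<longrightarrow> isotone_on K leK (\<le>) (ext g))
               \<and> (\<forall>x\<in>?E. ext g (c x) = g x)" if "g \<in> ?I" for g
    unfolding ext_def by (rule someI_ex[OF ex[OF that]])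
  define \<Phi> where "\<Phi> = (\<lambda>p. restrict (\<lambda>g. ext g p) ?I)"
  have cube: "continuous_map K (cube X H) \<Phi>"
    unfolding cube_def continuous_map_componentwise
  proof
    show "\<Phi> ` topspace K \<subseteq> extensional ?I" by (auto simp: \<Phi>_def)
    show "\<forall>k\<in>?I. continuous_map K (top_of_set {0..1}) (\<lambda>x. \<Phi> x k)"
    proof
      fix k assume k: "k \<in> ?I"
      show "continuous_map K (top_of_set {0..1}) (\<lambda>x. \<Phi> x k)"
        using ext[OF k] by (rule continuous_map_eq[OF conjunct1]) (use k in \<open>auto simp: \<Phi>_def\<close>)
    qed
  qed
  have Phic: "\<Phi> (c x) = Hmap X H x" if "x \<in> ?E" for x
    unfolding \<Phi>_def Hmap_def by (rule restrict_ext) (use ext that in blast)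
  have "\<Phi> ` topspace K \<subseteq> cube X H closure_of (Hmap X H ` ?E)"
  proof -
    have "\<Phi> ` (K closure_of (c ` ?E)) \<subseteq> cube X H closure_of (\<Phi> ` (c ` ?E))"
      by (rule continuous_map_image_closure_subset[OF cube])
    moreover have "\<Phi> ` (c ` ?E) = Hmap X H ` ?E" using Phic by (auto simp: image_iff)
    ultimately show ?thesis using cpt unfolding is_T2_compactification_def by simp
  qed
  then have cont: "continuous_map K (Htop X H) \<Phi>"
    unfolding Htop_def using cube by (simp add: continuous_map_in_subtopology image_subset_iff_funcset)
  have iso: "isotone_on K leK (Hle H) \<Phi>"
    unfolding isotone_on_def Hle_def
  proof (intro ballI impI)
    fix p q h assume pq: "p \<in> topspace K" "q \<in> topspace K" "leK p q" and h: "h \<in> H"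
    then have "h \<in> ?I" by blast
    then have "isotone_on K leK (\<le>) (ext h)" using ext h by blast
    then have "ext h p \<le> ext h q" using pq unfolding isotone_on_def by blast
    then show "\<Phi> p h \<le> \<Phi> q h" using h by (simp add: \<Phi>_def)
  qed
  show ?thesis unfolding dominates_def using cont iso Phic by blast
qed

lemma H0_determines:
  assumes cpt: "is_T2_compactification X le K leK c"
  shows "determines X le (extset X le K leK c)"
proof -
  let ?E = "topspace X" and ?H = "extset X le K leK c"
  have cK: "compact_space K" and hK: "Hausdorff_space K" and pK: "preorder_on_space K leK"
    and tK: "T2_preordered K leK" and cc: "continuous_map X K c"
    and ord: "\<And>x y. x \<in> ?E \<Longrightarrow> y \<in> ?E \<Longrightarrow> le x y \<longleftrightarrow> leK (c x) (c y)"
    using cpt by (auto simp: is_T2_compactification_def)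
  have sep: "\<exists>f\<in>?H. f y < f x" if xy: "x \<in> ?E" "y \<in> ?E" "\<not> le x y" for x y
  proof -
    have cx: "c x \<in> topspace K" and cy: "c y \<in> topspace K"
      using cc xy continuous_map_image_subset_topspace by blast+
    have nl: "\<not> leK (c x) (c y)" using ord xy by blast
    have "\<exists>F :: 'b \<Rightarrow> real. continuous_map K (top_of_set {0..1}) F \<and>
      (\<forall>p\<in>topspace K. \<forall>q\<in>topspace K. leK p q \<longrightarrow> F p \<le> F q) \<and>
      F (c y) = 0 \<and> F (c x) = 1"
      by (rule Nachbin_separation[OF cK hK tK pK cx cy nl]) blast
    then obtain F :: "'b \<Rightarrow> real" where F0: "continuous_map K (top_of_set {0..1}) F"
      "\<forall>p\<in>topspace K. \<forall>q\<in>topspace K. leK p q \<longrightarrow> F p \<le> F q"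
      "F (c y) = 0" "F (c x) = 1" by blast
    have F: "continuous_map K (top_of_set {0..1}) F"
      "\<And>p q. \<lbrakk>p \<in> topspace K; q \<in> topspace K; leK p q\<rbrakk> \<Longrightarrow> F p \<le> F q"
      "F (c y) = 0" "F (c x) = 1" using F0 by blast+
    define f where "f = restrict (F \<circ> c) ?E"
    have "continuous_map X (top_of_set {0..1}) (F \<circ> c)"
      using cc F(1) by (rule continuous_map_compose)
    then have fc: "continuous_map X (top_of_set {0..1}) f"
      by (rule continuous_map_eq) (simp add: f_def)
    have fi: "isotone_on X le (\<le>) f"
      unfolding isotone_on_def
    proof (intro ballI impI)
      fix u v assume uv: "u \<in> ?E" "v \<in> ?E" "le u v"
      then have "c u \<in> topspace K" "c v \<in> topspace K" "leK (c u) (c v)"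
        using cc ord continuous_map_image_subset_topspace by blast+
      then show "f u \<le> f v" using F(2) uv by (simp add: f_def)
    qed
    have "f \<in> Fam X le" unfolding Fam_def using fc fi by (simp add: f_def)
    moreover have "\<forall>u\<in>?E. F (c u) = f u" by (simp add: f_def)
    ultimately have "f \<in> ?H" unfolding extset_def using F(1) F(2)
      by (auto simp: isotone_on_def)
    moreover have "f y < f x" using F(3,4) xy by (simp add: f_def)
    ultimately show ?thesis by blast
  qed
  show ?thesis
    unfolding determines_def
  proof
    show "graph_of X le \<subseteq> ?E \<times> ?E \<inter> (\<Inter>h\<in>?H. graph_fun X h)"
    proof
      fix z assume "z \<in> graph_of X le"
      then obtain x y where z: "z = (x,y)" "x \<in> ?E" "y \<in> ?E" "le x y" by (auto simp: graph_of_def)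
      have "h x \<le> h y" if "h \<in> ?H" for h
        using that z unfolding extset_def Fam_def isotone_on_def by blast
      then show "z \<in> ?E \<times> ?E \<inter> (\<Inter>h\<in>?H. graph_fun X h)" using z by (auto simp: graph_fun_def)
    qed
    show "?E \<times> ?E \<inter> (\<Inter>h\<in>?H. graph_fun X h) \<subseteq> graph_of X le"
    proof
      fix z assume z: "z \<in> ?E \<times> ?E \<inter> (\<Inter>h\<in>?H. graph_fun X h)"
      then obtain x y where xy: "z = (x,y)" "x \<in> ?E" "y \<in> ?E" by blast
      have all: "h x \<le> h y" if "h \<in> ?H" for h using z xy that by (auto simp: graph_fun_def)
      have "le x y"
      proof (rule ccontr)
        assume "\<not> le x y"
        then obtain f where "f \<in> ?H" "f y < f x" using sep xy by blast
        then show False using all by force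
      qed
      then show "z \<in> graph_of X le" using xy by (simp add: graph_of_def)
    qed
  qed
qed

lemma extset_Fam: "extset X le K leK c \<subseteq> Fam X le"
  by (auto simp: extset_def)

theorem mainTheorem17:
  fixes T :: "'a topology" and le :: "'a \<Rightarrow> 'a \<Rightarrow> bool"
    and K0 :: "'b topology" and le0 :: "'b \<Rightarrow> 'b \<Rightarrow> bool" and c0 :: "'a \<Rightarrow> 'b"
  assumes "locally_compact_space T"
    and "completely_regular_space T" and "Hausdorff_space T"
    and "preorder_on_space T le" and "T2_preordered T le"
    and "determines T le (Fam T le)"
    and smallest: "is_T2_compactification T le K0 le0 c0"
    and "\<forall>(K :: (('a \<Rightarrow> real) \<Rightarrow> real) topology) leK c.
           is_T2_compactification T le K leK c \<longrightarrow> dominates T K leK c K0 le0 c0"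
  shows "determines T le (\<Inter>(Ifam T le)) \<and>
         iH T le (\<Inter>(Ifam T le)) = \<Inter>(Ifam T le) \<and>
         equivalent_compactifications T K0 le0 c0
           (Htop T (\<Inter>(Ifam T le))) (Hle (\<Inter>(Ifam T le))) (Hmap T (\<Inter>(Ifam T le)))"
proof -
  note LC = assms(1) and HT = assms(3) and dom = assms(8)
  define H0 where "H0 = extset T le K0 le0 c0"
  have H0F: "H0 \<subseteq> Fam T le" unfolding H0_def by (rule extset_Fam)
  have H0D: "determines T le H0" unfolding H0_def by (rule H0_determines[OF smallest])
  have D0: "dominates T K0 le0 c0 (Htop T H0) (Hle H0) (Hmap T H0)"
    by (rule Phi_dominates[OF LC smallest]) (simp add: H0_def)
  have iH0: "iH T le H0 = H0"
  proof
    show "iH T le H0 \<subseteq> H0" unfolding iH_extset H0_def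
      using dom_ext[OF D0] by (simp add: H0_def)
    show "H0 \<subseteq> iH T le H0"
    proof
      fix f assume f: "f \<in> H0"
      have "continuous_map (Htop T H0) (top_of_set {0..1}) (\<lambda>p. p f)"
        using f by (intro proj_cont01) blast
      moreover have "isotone_on (Htop T H0) (Hle H0) (\<le>) (\<lambda>p. p f)"
        using f by (auto simp: isotone_on_def Hle_def)
      moreover have "\<forall>x\<in>topspace T. Hmap T H0 x f = f x"
        using f by (simp add: Hmap_apply)
      ultimately show "f \<in> iH T le H0" unfolding iH_def using f H0F by blast
    qed
  qed
  have H0I: "H0 \<in> Ifam T le" unfolding Ifam_def using H0F H0D iH0 by blast
  have sub: "H0 \<subseteq> H" if "H \<in> Ifam T le" for H
  proof -
    have HF: "H \<subseteq> Fam T le" and HD: "determines T le H" and HI: "iH T le H = H"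
      using that by (auto simp: Ifam_def)
    have "is_T2_compactification T le (Htop T H) (Hle H) (Hmap T H)"
      by (rule Htop_compactification[OF LC HT HF HD])
    then have "dominates T (Htop T H) (Hle H) (Hmap T H) K0 le0 c0" using dom by blast
    then have "H0 \<subseteq> iH T le H" unfolding H0_def iH_extset by (rule dom_ext)
    then show ?thesis using HI by simp
  qed
  have SH0: "\<Inter>(Ifam T le) = H0"
  proof
    show "\<Inter>(Ifam T le) \<subseteq> H0" using H0I by blast
    show "H0 \<subseteq> \<Inter>(Ifam T le)" using sub by blast
  qed
  have "is_T2_compactification T le (Htop T H0) (Hle H0) (Hmap T H0)"
    by (rule Htop_compactification[OF LC HT H0F H0D])
  then have D1: "dominates T (Htop T H0) (Hle H0) (Hmap T H0) K0 le0 c0" using dom by blast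
  show ?thesis unfolding SH0 equivalent_compactifications_def
    using H0D iH0 D0 D1 by blast
qed

end
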